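(* Let $p>0$, $d>0$, $\chi>0$ and $\delta>0$ be real parameters, and for $\lambda>0$ define $$c(\lambda)=\lambda+\frac{p}{\lambda}-\frac{2\chi}{\pi}\arctan\!\left(\frac{1}{\delta}\min\!\left(\lambda,\frac{1}{\sqrt{d}}\right)\right).$$ Set $$\Lambda=\left\{\frac{p-\delta^2+\frac{2\chi}{\pi}\delta+\sqrt{\left(p-\delta^2+\frac{2\chi}{\pi}\delta\right)^2+4\delta^2p}}{2}\right\}^{1/2}.$$ Then $$\min_{\lambda>0} c(\lambda)=\begin{cases} 2\sqrt{p}-\frac{2\chi}{\pi}\arctan\!\left(\frac{1}{\sqrt{d}\,\delta}\right), & \text{if } dp>1,\\[4pt] \frac{1}{\sqrt{d}}+p\sqrt{d}-\frac{2\chi}{\pi}\arctan\!\left(\frac{1}{\sqrt{d}\,\delta}\right), & \text{if } 1-\frac{2\chi}{\pi\left(\delta+\frac{1}{d\delta}\right)}<dp<1,\\[4pt] \Lambda+\frac{p}{\Lambda}-\frac{2\chi}{\pi}\arctan\!\left(\frac{\Lambda}{\delta}\right), & \text{if } dp\le 1-\frac{2\chi}{\pi\left(\delta+\frac{1}{d\delta}\right)}. \end{cases}$$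
   Context: The function $c(\lambda)$ is the dispersion relation between the propagation speed $c$ and the exponential decay rate $\lambda$ of the front (density $\propto e^{-\lambda(x-ct)}$ far ahead) for the one-dimensional flux-limited Keller–Segel equation $\partial_t\rho+\partial_x(U_\delta[\partial_x\log S]\rho)=\partial_{xx}\rho+P(\rho)\rho$, $-d\partial_{xx}S+S=\rho$, with growth rate $P(\rho)=p$ for $0\le\rho\le 1/(1+p)$, and with chemotactic flux function $U_\delta(X)=\frac{2\chi}{\pi}\arctan(X/\delta)$. Here $p$ is the proliferation rate at low density, $d$ the diffusion coefficient of the chemoattractant, $\chi$ the modulation amplitude and $\delta^{-1}$ the stiffness of the chemotactic response. *)

theory Defs
  imports Complex_Main
begin

definition disp :: "real \<Rightarrow> real \<Rightarrow> real \<Rightarrow> real \<Rightarrow> real \<Rightarrow> real" where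
  "disp p d \<chi> \<delta> lam = lam + p / lam - (2 * \<chi> / pi) * arctan ((1 / \<delta>) * min lam (1 / sqrt d))"

definition Lam :: "real \<Rightarrow> real \<Rightarrow> real \<Rightarrow> real \<Rightarrow> real" where
  "Lam p d \<chi> \<delta> = sqrt ((p - \<delta>\<^sup>2 + (2 * \<chi> / pi) * \<delta>
      + sqrt ((p - \<delta>\<^sup>2 + (2 * \<chi> / pi) * \<delta>)\<^sup>2 + 4 * \<delta>\<^sup>2 * p)) / 2)"

definition is_min_on :: "(real \<Rightarrow> real) \<Rightarrow> real set \<Rightarrow> real \<Rightarrow> bool" where
  "is_min_on f S v \<longleftrightarrow> (\<exists>x\<in>S. f x = v) \<and> (\<forall>x\<in>S. v \<le> f x)"

end

theory Submission imports Defs begin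


definition G :: "real \<Rightarrow> real \<Rightarrow> real \<Rightarrow> real \<Rightarrow> real" where
  "G p k \<delta> x = x + p / x - k * arctan (x / \<delta>)"

lemma G_deriv0:
  fixes x p k \<delta> :: real
  assumes "x > 0" "\<delta> > 0"
  shows "DERIV (G p k \<delta>) x :> 1 - p / x\<^sup>2 - k * (1/\<delta> / (1 + (x/\<delta>)\<^sup>2))"
proof -
  have "DERIV (G p k \<delta>) x :> 1 + (- (p * 1) / (x * x)) - k * (1 / (1 + (x/\<delta>)\<^sup>2) * (1 / \<delta>))"
    unfolding G_def[abs_def] using assms
    by (intro derivative_eq_intros refl) (auto simp: divide_inverse)
  moreover have "1 + (- (p * 1) / (x * x)) - k * (1 / (1 + (x/\<delta>)\<^sup>2) * (1 / \<delta>)) = 1 - p / x\<^sup>2 - k * (1/\<delta> / (1 + (x/\<delta>)\<^sup>2))"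
    by (simp add: power2_eq_square)
  ultimately show ?thesis by metis
qed

lemma G_deriv_eq:
  fixes x p k \<delta> :: real
  assumes "x > 0" "\<delta> > 0"
  shows "1 - p / x\<^sup>2 - k * (1/\<delta> / (1 + (x/\<delta>)\<^sup>2)) =
     (x^4 - (p - \<delta>\<^sup>2 + k*\<delta>) * x\<^sup>2 - p*\<delta>\<^sup>2) / (x\<^sup>2 * (\<delta>\<^sup>2 + x\<^sup>2))"
proof -
  have e1: "1 + (x/\<delta>)\<^sup>2 = (\<delta>\<^sup>2 + x\<^sup>2) / \<delta>\<^sup>2" using assms
    proof -
    have "\<delta>\<^sup>2 \<noteq> 0" using assms by simp
    then show ?thesis by (simp add: add_divide_distrib power_divide)
  qed
  have e: "1/\<delta> / (1 + (x/\<delta>)\<^sup>2) = \<delta> / (\<delta>\<^sup>2 + x\<^sup>2)" unfolding e1 using assms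
    by (simp add: power2_eq_square)
  have "x\<^sup>2 > 0" "\<delta>\<^sup>2 + x\<^sup>2 > 0" using assms by (auto intro: add_pos_pos)
  then show ?thesis unfolding e
    by (simp add: divide_simps) (simp add: algebra_simps power2_eq_square power4_eq_xxxx)
qed

lemma quad_facts:
  fixes a q :: real
  assumes "q > 0"
  defines "u \<equiv> (a + sqrt (a\<^sup>2 + 4*q)) / 2"
  shows "u > 0" "u\<^sup>2 - a*u - q = 0" "u - a > 0"
proof -
  have s: "(sqrt (a\<^sup>2 + 4*q))\<^sup>2 = a\<^sup>2 + 4*q" using assms by (simp add: add_nonneg_pos)
  have "\<bar>a\<bar> < sqrt (a\<^sup>2 + 4*q)"
    using assms by (intro real_less_rsqrt) (simp add: power2_abs)
  then have D: "sqrt (a\<^sup>2 + 4*q) > \<bar>a\<bar>" by simp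
  have "a + sqrt (a\<^sup>2 + 4*q) > 0" using D abs_ge_minus_self[of a] by linarith
  then show "u > 0" unfolding u_def by simp
  have "sqrt (a\<^sup>2 + 4*q) - a > 0" using D abs_ge_self[of a] by linarith
  then show "u - a > 0" unfolding u_def by (simp add: field_simps)
  show "u\<^sup>2 - a*u - q = 0" unfolding u_def using s by (simp add: power2_eq_square field_simps)
qed


lemma num_factor:
  fixes a q u x :: real
  assumes "u\<^sup>2 - a*u - q = 0"
  shows "x^4 - a * x\<^sup>2 - q = (x\<^sup>2 - u) * (x\<^sup>2 + u - a)"
proof -
  have "x^4 - a * x\<^sup>2 - q = (x^4 - a * x\<^sup>2 - q) - (u\<^sup>2 - a*u - q)" using assms by simp
  also have "\<dots> = (x\<^sup>2 - u) * (x\<^sup>2 + u - a)" by (simp add: algebra_simps power2_eq_square power4_eq_xxxx)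
  finally show ?thesis .
qed

lemma G_sign:
  fixes p k \<delta> x :: real
  assumes p: "p > 0" and d: "\<delta> > 0" and x: "x > 0"
  defines "a \<equiv> p - \<delta>\<^sup>2 + k*\<delta>"
  defines "u \<equiv> (a + sqrt (a\<^sup>2 + 4*(\<delta>\<^sup>2*p))) / 2"
  shows "x \<le> sqrt u \<Longrightarrow> (x^4 - (p - \<delta>\<^sup>2 + k*\<delta>) * x\<^sup>2 - p*\<delta>\<^sup>2) / (x\<^sup>2 * (\<delta>\<^sup>2 + x\<^sup>2)) \<le> 0"
    and "x \<ge> sqrt u \<Longrightarrow> (x^4 - (p - \<delta>\<^sup>2 + k*\<delta>) * x\<^sup>2 - p*\<delta>\<^sup>2) / (x\<^sup>2 * (\<delta>\<^sup>2 + x\<^sup>2)) \<ge> 0"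
proof -
  have q: "\<delta>\<^sup>2*p > 0" using p d by simp
  note qf = quad_facts[OF q, of a, folded u_def]
  have N: "x^4 - (p - \<delta>\<^sup>2 + k*\<delta>) * x\<^sup>2 - p*\<delta>\<^sup>2 = (x\<^sup>2 - u) * (x\<^sup>2 + u - a)"
    using num_factor[OF qf(2), of x] unfolding a_def by (simp add: mult.commute)
  have pos1: "x\<^sup>2 + u - a > 0" proof -
    have "x\<^sup>2 > 0" using x by simp
    then show ?thesis using qf(3) by linarith
  qed
  have den: "x\<^sup>2 * (\<delta>\<^sup>2 + x\<^sup>2) > 0" using x d by (intro mult_pos_pos add_pos_pos) auto
  have uu: "(sqrt u)\<^sup>2 = u" using qf(1) by simp
  {
    assume "x \<le> sqrt u"
    then have "x\<^sup>2 \<le> u" using x uu by (metis less_imp_le power_mono)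
    then have "(x\<^sup>2 - u) * (x\<^sup>2 + u - a) \<le> 0" using pos1 by (simp add: mult_nonpos_nonneg)
    then show "(x^4 - (p - \<delta>\<^sup>2 + k*\<delta>) * x\<^sup>2 - p*\<delta>\<^sup>2) / (x\<^sup>2 * (\<delta>\<^sup>2 + x\<^sup>2)) \<le> 0"
      unfolding N using den by (simp add: divide_nonpos_pos)
  }
  {
    assume "x \<ge> sqrt u"
    then have "x\<^sup>2 \<ge> u" using qf(1) uu by (metis real_sqrt_ge_zero less_imp_le power_mono)
    then have "(x\<^sup>2 - u) * (x\<^sup>2 + u - a) \<ge> 0" using pos1 by simp
    then show "(x^4 - (p - \<delta>\<^sup>2 + k*\<delta>) * x\<^sup>2 - p*\<delta>\<^sup>2) / (x\<^sup>2 * (\<delta>\<^sup>2 + x\<^sup>2)) \<ge> 0"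
      unfolding N using den by simp
  }
qed

lemma G_dec:
  fixes p k \<delta> b c :: real
  assumes p: "p > 0" and d: "\<delta> > 0" and b: "0 < b" "b \<le> c"
    and c: "c \<le> sqrt ((p - \<delta>\<^sup>2 + k*\<delta> + sqrt ((p - \<delta>\<^sup>2 + k*\<delta>)\<^sup>2 + 4*(\<delta>\<^sup>2*p))) / 2)"
  shows "G p k \<delta> c \<le> G p k \<delta> b"
proof (rule DERIV_nonpos_imp_nonincreasing[OF b(2)])
  fix x assume x: "b \<le> x" "x \<le> c"
  then have "x > 0" using b by simp
  show "\<exists>y. DERIV (G p k \<delta>) x :> y \<and> y \<le> 0"
    using G_deriv0[OF \<open>x>0\<close> d, of p k] G_deriv_eq[OF \<open>x>0\<close> d, of p k]
      G_sign(1)[OF p d \<open>x>0\<close>, of k] x c by auto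
qed

lemma G_inc:
  fixes p k \<delta> b c :: real
  assumes p: "p > 0" and d: "\<delta> > 0" and b: "b \<le> c"
    and c: "b \<ge> sqrt ((p - \<delta>\<^sup>2 + k*\<delta> + sqrt ((p - \<delta>\<^sup>2 + k*\<delta>)\<^sup>2 + 4*(\<delta>\<^sup>2*p))) / 2)"
    and b0: "b > 0"
  shows "G p k \<delta> b \<le> G p k \<delta> c"
proof (rule DERIV_nonneg_imp_nondecreasing[OF b])
  fix x assume x: "b \<le> x" "x \<le> c"
  then have "x > 0" using b0 by simp
  show "\<exists>y. DERIV (G p k \<delta>) x :> y \<and> y \<ge> 0"
    using G_deriv0[OF \<open>x>0\<close> d, of p k] G_deriv_eq[OF \<open>x>0\<close> d, of p k]
      G_sign(2)[OF p d \<open>x>0\<close>, of k] x c by auto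
qed

lemma amgm:
  fixes p x :: real
  assumes "p > 0" "x > 0"
  shows "2 * sqrt p \<le> x + p / x"
proof -
  have sp: "(sqrt p)\<^sup>2 = p" using assms by simp
  have "x + p / x - 2 * sqrt p = (x - sqrt p)\<^sup>2 / x"
    using assms sp by (simp add: field_simps power2_eq_square)
  also have "\<dots> \<ge> 0" using assms by simp
  finally show ?thesis by simp
qed

lemma h_mono:
  fixes p s x :: real
  assumes "0 < s" "p \<le> s\<^sup>2" "s \<le> x"
  shows "s + p / s \<le> x + p / x"
proof -
  have "x + p / x - (s + p / s) = (x - s) * (x * s - p) / (x * s)"
    using assms by (simp add: field_simps)
  also have "\<dots> \<ge> 0"
  proof -
    have "x * s \<ge> s * s" using assms by (simp add: mult_right_mono)
    moreover have "p \<le> s * s" using assms by (simp add: power2_eq_square)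
    ultimately have "x * s - p \<ge> 0" by linarith
    then show ?thesis using assms by simp
  qed
  finally show ?thesis by simp
qed



theorem mainTheorem1:
  fixes p d \<chi> \<delta> :: real
  assumes "p > 0" and "d > 0" and "\<chi> > 0" and "\<delta> > 0"
  shows "(d * p > 1 \<longrightarrow>
           is_min_on (disp p d \<chi> \<delta>) {0<..}
             (2 * sqrt p - (2 * \<chi> / pi) * arctan (1 / (sqrt d * \<delta>))))
       \<and> (1 - 2 * \<chi> / (pi * (\<delta> + 1 / (d * \<delta>))) < d * p \<and> d * p < 1 \<longrightarrow>
           is_min_on (disp p d \<chi> \<delta>) {0<..}
             (1 / sqrt d + p * sqrt d - (2 * \<chi> / pi) * arctan (1 / (sqrt d * \<delta>))))
       \<and> (d * p \<le> 1 - 2 * \<chi> / (pi * (\<delta> + 1 / (d * \<delta>))) \<longrightarrow>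
           is_min_on (disp p d \<chi> \<delta>) {0<..}
             (Lam p d \<chi> \<delta> + p / Lam p d \<chi> \<delta>
              - (2 * \<chi> / pi) * arctan (Lam p d \<chi> \<delta> / \<delta>)))"
  
proof -
  note p = assms(1) and d = assms(2) and \<chi> = assms(3) and dl = assms(4)
  define k where "k = 2 * \<chi> / pi"
  define s where "s = 1 / sqrt d"
  define a where "a = p - \<delta>\<^sup>2 + k*\<delta>"
  define u where "u = (a + sqrt (a\<^sup>2 + 4*(\<delta>\<^sup>2*p))) / 2"
  have k: "k > 0" unfolding k_def using \<chi> by simp
  have s0: "s > 0" unfolding s_def using d by simp
  have s2: "s\<^sup>2 = 1 / d" unfolding s_def using d by (simp add: power_divide)
  have q: "\<delta>\<^sup>2*p > 0" using p dl by simp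
  note qf = quad_facts[OF q, of a, folded u_def]
  have LamE: "Lam p d \<chi> \<delta> = sqrt u"
    unfolding Lam_def u_def a_def k_def by (simp add: mult.assoc)
  define L where "L = sqrt u"
  have L0: "L > 0" unfolding L_def using qf(1) by simp
  have LL: "L = sqrt ((p - \<delta>\<^sup>2 + k*\<delta> + sqrt ((p - \<delta>\<^sup>2 + k*\<delta>)\<^sup>2 + 4*(\<delta>\<^sup>2*p))) / 2)"
    unfolding L_def u_def a_def ..
  have disp_eq: "disp p d \<chi> \<delta> x = (if x \<le> s then G p k \<delta> x else x + p/x - k*arctan (s/\<delta>))" for x
    unfolding disp_def G_def k_def s_def min_def by auto
  have arct: "arctan (1 / (sqrt d * \<delta>)) = arctan (s / \<delta>)" unfolding s_def by simp
  have at_mono: "arctan (min x s / \<delta>) \<le> arctan (s / \<delta>)" for x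
    using dl by (simp add: arctan_le_iff divide_right_mono)
  define E where "E = (1 - d*p) * (1 + \<delta>\<^sup>2*d) - k*\<delta>*d"
  have condE: "(1 - 2 * \<chi> / (pi * (\<delta> + 1 / (d * \<delta>))) < d * p) \<longleftrightarrow> E < 0"
  proof -
    have e: "2 * \<chi> / (pi * (\<delta> + 1 / (d * \<delta>))) = k*d*\<delta> / (d*\<delta>\<^sup>2 + 1)"
      unfolding k_def using d dl by (simp add: field_simps power2_eq_square)
    have pos: "d*\<delta>\<^sup>2 + 1 > 0" using d dl by (simp add: add_pos_pos)
    have "(1 - k*d*\<delta> / (d*\<delta>\<^sup>2 + 1) < d * p) \<longleftrightarrow> (1 - d*p < k*d*\<delta> / (d*\<delta>\<^sup>2 + 1))" by linarith
    also have "\<dots> \<longleftrightarrow> (1 - d*p) * (d*\<delta>\<^sup>2 + 1) < k*d*\<delta>" using pos by (simp add: pos_less_divide_eq)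
    also have "\<dots> \<longleftrightarrow> E < 0" unfolding E_def by (simp add: algebra_simps)
    finally show ?thesis unfolding e .
  qed
  have EQ: "E = d\<^sup>2 * ((s\<^sup>2 - u) * (s\<^sup>2 + u - a))"
  proof -
    have "E = d\<^sup>2 * ((1/d)\<^sup>2 - a*(1/d) - \<delta>\<^sup>2*p)"
      unfolding E_def a_def using d by (simp add: field_simps power2_eq_square)
    also have "\<dots> = d\<^sup>2 * (s^4 - a*s\<^sup>2 - \<delta>\<^sup>2*p)"
    proof -
      have s4: "s^4 = (s\<^sup>2)\<^sup>2" by (simp flip: power_mult)
      show ?thesis unfolding s4 s2 ..
    qed
    also have "\<dots> = d\<^sup>2 * ((s\<^sup>2 - u) * (s\<^sup>2 + u - a))"
      using num_factor[OF qf(2), of s] by simp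
    finally show ?thesis .
  qed
  have pos1: "s\<^sup>2 + u - a > 0"
  proof -
    have "s\<^sup>2 > 0" using s0 by simp
    then show ?thesis using qf(3) by linarith
  qed
  have sL: "s < L \<longleftrightarrow> s\<^sup>2 < u"
  proof -
    have "s = sqrt (s\<^sup>2)" using s0 by simp
    then have "s < L \<longleftrightarrow> sqrt (s\<^sup>2) < sqrt u" unfolding L_def by simp
    then show ?thesis by (simp only: real_sqrt_less_iff)
  qed
  have ElL: "E < 0 \<longleftrightarrow> s < L"
  proof -
    have d2: "d\<^sup>2 > 0" using d by simp
    have "E < 0 \<longleftrightarrow> (s\<^sup>2 - u) * (s\<^sup>2 + u - a) < 0" unfolding EQ using d2
      by (simp add: mult_less_0_iff)
    also have "\<dots> \<longleftrightarrow> s\<^sup>2 - u < 0" using pos1 by (simp add: mult_less_0_iff)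
    finally show ?thesis using sL by simp
  qed
  have cond_sL: "(1 - 2 * \<chi> / (pi * (\<delta> + 1 / (d * \<delta>))) < d * p) \<longleftrightarrow> s < L"
    using condE ElL by simp
  have dp_s: "p \<le> s\<^sup>2" if "d * p \<le> 1"
  proof -
    have "p \<le> 1/d" using d that by (simp add: pos_le_divide_eq mult.commute)
    then show ?thesis using s2 by simp
  qed
  show ?thesis
  proof (intro conjI impI)
    assume h: "d * p > 1"
    have sp: "s \<le> sqrt p"
    proof -
      have "1/d \<le> p" using d h by (simp add: pos_divide_le_eq mult.commute)
      then have "s\<^sup>2 \<le> p" using s2 by simp
      then have "sqrt (s\<^sup>2) \<le> sqrt p" by (rule real_sqrt_le_mono)
      then show ?thesis using s0 by simp
    qed
    show "is_min_on (disp p d \<chi> \<delta>) {0<..} (2 * sqrt p - (2 * \<chi> / pi) * arctan (1 / (sqrt d * \<delta>)))"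
      unfolding is_min_on_def
    proof (intro conjI ballI bexI)
      have "min (sqrt p) s = s" using sp by simp
      moreover have "sqrt p + p / sqrt p = 2 * sqrt p" using p
        by (metis mult_2 real_div_sqrt less_eq_real_def)
      ultimately show "disp p d \<chi> \<delta> (sqrt p) = 2 * sqrt p - 2 * \<chi> / pi * arctan (1 / (sqrt d * \<delta>))"
        unfolding disp_def arct s_def[symmetric] using dl by (simp add: mult.commute)
      show "sqrt p \<in> {0<..}" using p by simp
    next
      fix x :: real assume "x \<in> {0<..}"
      then have x: "x > 0" by simp
      have "2 * sqrt p \<le> x + p / x" using amgm[OF p x] .
      moreover have "k * arctan ((1 / \<delta>) * min x s) \<le> k * arctan (s / \<delta>)"
        using at_mono[of x] k by (simp add: mult.commute)
      ultimately show "2 * sqrt p - 2 * \<chi> / pi * arctan (1 / (sqrt d * \<delta>)) \<le> disp p d \<chi> \<delta> x"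
        unfolding disp_def arct k_def[symmetric] s_def[symmetric] by linarith
    qed
  next
    assume h: "1 - 2 * \<chi> / (pi * (\<delta> + 1 / (d * \<delta>))) < d * p \<and> d * p < 1"
    then have sL': "s < L" using cond_sL by simp
    have ps: "p \<le> s\<^sup>2" using dp_s h by simp
    have val: "disp p d \<chi> \<delta> s = 1 / sqrt d + p * sqrt d - 2 * \<chi> / pi * arctan (1 / (sqrt d * \<delta>))"
      unfolding disp_def arct using d by (simp add: s_def k_def mult.commute)
    show "is_min_on (disp p d \<chi> \<delta>) {0<..} (1 / sqrt d + p * sqrt d - (2 * \<chi> / pi) * arctan (1 / (sqrt d * \<delta>)))"
      unfolding is_min_on_def
    proof (intro conjI ballI bexI)
      show "disp p d \<chi> \<delta> s = 1 / sqrt d + p * sqrt d - 2 * \<chi> / pi * arctan (1 / (sqrt d * \<delta>))" by (rule val)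
      show "s \<in> {0<..}" using s0 by simp
    next
      fix x :: real assume "x \<in> {0<..}"
      then have x: "x > 0" by simp
      show "1 / sqrt d + p * sqrt d - 2 * \<chi> / pi * arctan (1 / (sqrt d * \<delta>)) \<le> disp p d \<chi> \<delta> x"
      proof (cases "x \<le> s")
        case True
        have "G p k \<delta> s \<le> G p k \<delta> x" using G_dec[OF p dl x True] sL' LL by simp
        moreover have "disp p d \<chi> \<delta> s = G p k \<delta> s" using disp_eq[of s] by simp
        ultimately show ?thesis using val disp_eq[of x] True by simp
      next
        case False
        have "s + p / s \<le> x + p / x" using h_mono[OF s0 ps] False by simp
        moreover have "disp p d \<chi> \<delta> s = s + p/s - k*arctan (s/\<delta>)" using disp_eq[of s] G_def by simp
        ultimately show ?thesis using val disp_eq[of x] False by simp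
      qed
    qed
  next
    assume h: "d * p \<le> 1 - 2 * \<chi> / (pi * (\<delta> + 1 / (d * \<delta>)))"
    then have Ls: "L \<le> s" using cond_sL by simp
    have "2 * \<chi> / (pi * (\<delta> + 1 / (d * \<delta>))) > 0" using \<chi> d dl by (simp add: add_pos_pos)
    then have ps: "p \<le> s\<^sup>2" using dp_s h by simp
    have val: "disp p d \<chi> \<delta> L = G p k \<delta> L" using disp_eq[of L] Ls by simp
    have Gmin: "G p k \<delta> L \<le> G p k \<delta> x" if "0 < x" "x \<le> s" for x
    proof (cases "x \<le> L")
      case True
      then show ?thesis using G_dec[OF p dl \<open>0<x\<close> True] LL by simp
    next
      case False
      then show ?thesis using G_inc[of p \<delta> L x k] p dl LL L0 by simp
    qed
    show "is_min_on (disp p d \<chi> \<delta>) {0<..}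
             (Lam p d \<chi> \<delta> + p / Lam p d \<chi> \<delta> - (2 * \<chi> / pi) * arctan (Lam p d \<chi> \<delta> / \<delta>))"
      unfolding is_min_on_def LamE L_def[symmetric]
    proof (intro conjI ballI bexI)
      show "disp p d \<chi> \<delta> L = L + p / L - 2 * \<chi> / pi * arctan (L / \<delta>)"
        unfolding val G_def k_def ..
      show "L \<in> {0<..}" using L0 by simp
    next
      fix x :: real assume "x \<in> {0<..}"
      then have x: "x > 0" by simp
      have GL: "L + p / L - 2 * \<chi> / pi * arctan (L / \<delta>) = G p k \<delta> L" unfolding G_def k_def ..
      show "L + p / L - 2 * \<chi> / pi * arctan (L / \<delta>) \<le> disp p d \<chi> \<delta> x"
      proof (cases "x \<le> s")
        case True
        then show ?thesis using Gmin[OF x True] disp_eq[of x] GL by simp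
      next
        case False
        have "s + p / s \<le> x + p / x" using h_mono[OF s0 ps] False by simp
        moreover have "G p k \<delta> L \<le> G p k \<delta> s" using Gmin[OF s0] by simp
        ultimately show ?thesis using disp_eq[of x] False GL G_def by simp
      qed
    qed
  qed
qed

end
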